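(* Let $(A,\diamond,\circ,\lambda)$ be a left semi-truss such that $(A,\diamond)$ is a left cancellative semigroup, let $e$ be an idempotent of $(A,\diamond)$, and define $\sigma:A\to A$ by $\sigma(a)=a\circ e$. Write $a\triangleright b:=\lambda(a,b)$. Then: (1) $\sigma(a\circ b)=a\circ\sigma(b)$ for all $a,b\in A$; (2) $\sigma(a\circ b)=\sigma(a)\diamond(a\triangleright\sigma(b))$ for all $a,b\in A$; (3) $\sigma$ is bijective if and only if $(A,\circ)$ has a right identity $n$ and there is $u\in A$ with $e\circ u=u\circ e=n$.
   Context: A left semi-truss $(A,\diamond,\circ,\lambda)$ is a set $A$ with two associative binary operations $\diamond,\circ$ and a function $\lambda:A\times A\to A$ such that $a\circ(b\diamond c)=(a\circ b)\diamond\lambda(a,c)$ for all $a,b,c\in A$. A semigroup $(A,\diamond)$ is left cancellative if $a\diamond b=a\diamond c$ implies $b=c$. *)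

theory Defs
  imports Main
begin

definition associative_op :: "('a \<Rightarrow> 'a \<Rightarrow> 'a) \<Rightarrow> bool" where
  "associative_op f \<longleftrightarrow> (\<forall>a b c. f (f a b) c = f a (f b c))"

definition left_semi_truss ::
  "('a \<Rightarrow> 'a \<Rightarrow> 'a) \<Rightarrow> ('a \<Rightarrow> 'a \<Rightarrow> 'a) \<Rightarrow> ('a \<Rightarrow> 'a \<Rightarrow> 'a) \<Rightarrow> bool" where
  "left_semi_truss dia circ lam \<longleftrightarrow>
     associative_op dia \<and> associative_op circ \<and>
     (\<forall>a b c. circ a (dia b c) = dia (circ a b) (lam a c))"

definition left_cancellative :: "('a \<Rightarrow> 'a \<Rightarrow> 'a) \<Rightarrow> bool" where
  "left_cancellative f \<longleftrightarrow> (\<forall>a b c. f a b = f a c \<longrightarrow> b = c)"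

definition right_identity :: "('a \<Rightarrow> 'a \<Rightarrow> 'a) \<Rightarrow> 'a \<Rightarrow> bool" where
  "right_identity f n \<longleftrightarrow> (\<forall>a. f a n = a)"

end

theory Submission
  imports Defs
begin

theorem proposition2p4:
  fixes dia circ lam :: "'a \<Rightarrow> 'a \<Rightarrow> 'a" and e :: 'a and \<sigma> :: "'a \<Rightarrow> 'a"
  assumes "left_semi_truss dia circ lam"
    and "left_cancellative dia"
    and "dia e e = e"
    and "\<And>a. \<sigma> a = circ a e"
  shows "(\<forall>a b. \<sigma> (circ a b) = circ a (\<sigma> b))
       \<and> (\<forall>a b. \<sigma> (circ a b) = dia (\<sigma> a) (lam a (\<sigma> b)))
       \<and> (bij \<sigma> \<longleftrightarrow> (\<exists>n. right_identity circ n \<and> (\<exists>u. circ e u = n \<and> circ u e = n)))"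
proof -
  have da: "\<And>a b c. dia (dia a b) c = dia a (dia b c)"
    and ca: "\<And>a b c. circ (circ a b) c = circ a (circ b c)"
    and tr: "\<And>a b c. circ a (dia b c) = dia (circ a b) (lam a c)"
    using assms(1) unfolding left_semi_truss_def associative_op_def by auto
  have lc: "\<And>a b c. dia a b = dia a c \<Longrightarrow> b = c"
    using assms(2) unfolding left_cancellative_def by blast
  have el: "\<And>x. dia e x = x"
  proof -
    fix x
    have "dia e (dia e x) = dia e x" using da[of e e x] assms(3) by simp
    thus "dia e x = x" by (rule lc)
  qed
  have s: "\<And>a. \<sigma> a = circ a e" by (rule assms(4))
  have P1: "\<forall>a b. \<sigma> (circ a b) = circ a (\<sigma> b)" by (simp add: s ca)
  have P2: "\<forall>a b. \<sigma> (circ a b) = dia (\<sigma> a) (lam a (\<sigma> b))"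
  proof (intro allI)
    fix a b
    have "\<sigma> (circ a b) = circ a (dia e (circ b e))" by (simp add: s ca el)
    also have "\<dots> = dia (\<sigma> a) (lam a (\<sigma> b))" by (simp add: tr s)
    finally show "\<sigma> (circ a b) = dia (\<sigma> a) (lam a (\<sigma> b))" .
  qed
  have P3: "bij \<sigma> \<longleftrightarrow> (\<exists>n. right_identity circ n \<and> (\<exists>u. circ e u = n \<and> circ u e = n))"
  proof
    assume b: "bij \<sigma>"
    hence inj: "inj \<sigma>" and sur: "surj \<sigma>" by (auto simp: bij_def)
    obtain n where n: "\<sigma> n = e" using sur by (metis surjD)
    have ri: "\<And>a. circ a n = a"
    proof -
      fix a
      have "\<sigma> (circ a n) = \<sigma> a" using P1 n s by simp
      thus "circ a n = a" using inj by (simp add: inj_eq)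
    qed
    obtain u where u: "\<sigma> u = n" using sur by (metis surjD)
    have "\<sigma> (circ e u) = \<sigma> n" using P1 u n ri by simp
    hence "circ e u = n" using inj by (simp add: inj_eq)
    moreover have "circ u e = n" using u s by simp
    ultimately show "\<exists>n. right_identity circ n \<and> (\<exists>u. circ e u = n \<and> circ u e = n)"
      using ri unfolding right_identity_def by blast
  next
    assume "\<exists>n. right_identity circ n \<and> (\<exists>u. circ e u = n \<and> circ u e = n)"
    then obtain n u where ri: "\<And>a. circ a n = a" and eu: "circ e u = n" and ue: "circ u e = n"
      unfolding right_identity_def by blast
    show "bij \<sigma>"
    proof (rule bij_betwI')
      fix x y
      show "(\<sigma> x = \<sigma> y) = (x = y)"
      proof
        assume "\<sigma> x = \<sigma> y"
        hence "circ (circ x e) u = circ (circ y e) u" by (simp add: s)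
        thus "x = y" by (simp add: ca eu ri)
      qed simp
    next
      fix x show "\<sigma> x \<in> UNIV" by simp
    next
      fix y
      have "\<sigma> (circ y u) = y" by (simp add: s ca ue ri)
      thus "\<exists>x\<in>UNIV. y = \<sigma> x" by (metis UNIV_I)
    qed
  qed
  show ?thesis using P1 P2 P3 by blast
qed

end
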